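(* For every protocol $\Pi$, there exists $(\mathsf C,j)\in\{\mathsf A,\mathsf B\}\times\mathbb N$ such that $\mathbb E_{\ell\leftarrow L_{\Pi_{(\mathsf C,j)}}}[M^{\mathsf C}_{\Pi_{(\mathsf C,j)}}(\ell)]=1$.
   Context: Protocols are $m$-round single-bit-message protocols $(\mathsf A,\mathsf B)$ identified with the complete binary tree of height $m$, with control scheme, edge probabilities $e_\Pi(u,ub)$, output $\chi_\Pi:\text{leaves}\to\{0,1\}$, visit probabilities $v_\Pi(u)$, leaf distribution $L_\Pi$; $\Pi_u$ is the subprotocol under $u$ (or $\perp$ if $v_\Pi(u)=0$); expectations over $L_\perp$ are $0$; $\mathbb E_{L_{\Pi_u}}[M]$ is the expectation of $M$ restricted to leaves under $u$. $\mathsf A$-dominated measure $M^{\mathsf A}_\Pi$: for a 0-round protocol with leaf $\ell$, $M^{\mathsf A}_\Pi(\ell)=\chi_\Pi(\ell)$; otherwise for a leaf with first bit $b$, with $\mu_c=\mathbb E_{L_{\Pi_c}}[M^{\mathsf A}_{\Pi_c}]$: value $0$ if $e_\Pi(\lambda,b)=0$; $M^{\mathsf A}_{\Pi_b}(\ell)$ if $e_\Pi(\lambda,b)=1$, or if $e_\Pi(\lambda,b)\in(0,1)$ and ($\mathsf A$ controls the root or $\mu_b\le\mu_{1-b}$); $\frac{\mu_{1-b}}{\mu_b}M^{\mathsf A}_{\Pi_b}(\ell)$ otherwise. $M^{\mathsf B}_\Pi$ is defined identically with $\mathsf A,\mathsf B$ exchanged and base case $1-\chi_\Pi(\ell)$;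 dominated measures of $\perp$ are zero. Conditional protocol: for $\mathbb E_{L_\Pi}[M]<1$, $\Pi|_M$ keeps control and output and has $e_{\Pi|_M}(u,ub)=0$ if $\mathbb E_{L_{\Pi_u}}[M]=1$, else $e_\Pi(u,ub)\frac{1-\mathbb E_{L_{\Pi_{ub}}}[M]}{1-\mathbb E_{L_{\Pi_u}}[M]}$; $\Pi|_M=\perp$ if $\mathbb E_{L_\Pi}[M]=1$ or $\Pi=\perp$. Sequence: $\Pi_{(\mathsf A,0)}=\Pi$, $\Pi_{(\mathsf B,j)}=\Pi_{(\mathsf A,j)}|_{M^{\mathsf A}_{\Pi_{(\mathsf A,j)}}}$, $\Pi_{(\mathsf A,j+1)}=\Pi_{(\mathsf B,j)}|_{M^{\mathsf B}_{\Pi_{(\mathsf B,j)}}}$. *)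

theory Defs
  imports Main "HOL.Real"
begin

text \<open>A protocol with single-bit messages; nodes of the complete binary tree of
height rounds are bit lists of length at most rounds (the root is the empty list).
ctrlA u = True means party A controls node u; edge u b is the probability e(u, ub);
out is the output function chi on leaves (lists of length rounds).\<close>

record proto =
  rounds :: nat
  ctrlA :: "bool list \<Rightarrow> bool"
  edge :: "bool list \<Rightarrow> bool \<Rightarrow> real"
  out :: "bool list \<Rightarrow> bool"

text \<open>Protocols with possible bottom: None stands for the empty protocol.\<close>
type_synonym protoo = "proto option"

definition valid_proto :: "proto \<Rightarrow> bool" where
  "valid_proto P \<longleftrightarrow> (\<forall>u b. length u < rounds P \<longrightarrow> 0 \<le> edge P u b) \<and>
     (\<forall>u. length u < rounds P \<longrightarrow> edge P u True + edge P u False = 1)"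

definition visit :: "proto \<Rightarrow> bool list \<Rightarrow> real" where
  "visit P u = (\<Prod>i<length u. edge P (take i u) (u ! i))"

definition leaves :: "proto \<Rightarrow> bool list set" where
  "leaves P = {l. length l = rounds P}"

fun expect :: "protoo \<Rightarrow> (bool list \<Rightarrow> real) \<Rightarrow> real" where
  "expect None M = 0"
| "expect (Some P) M = (\<Sum>l\<in>leaves P. visit P l * M l)"

definition shift :: "proto \<Rightarrow> bool list \<Rightarrow> proto" where
  "shift P u = \<lparr>rounds = rounds P - length u, ctrlA = (\<lambda>v. ctrlA P (u @ v)),
     edge = (\<lambda>v b. edge P (u @ v) b), out = (\<lambda>v. out P (u @ v))\<rparr>"

fun subp :: "protoo \<Rightarrow> bool list \<Rightarrow> protoo" where
  "subp None u = None"
| "subp (Some P) u = (if visit P u = 0 then None else Some (shift P u))"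

definition expect_under :: "protoo \<Rightarrow> bool list \<Rightarrow> (bool list \<Rightarrow> real) \<Rightarrow> real" where
  "expect_under P u M = expect (subp P u) (\<lambda>v. M (u @ v))"

text \<open>Dominated measure. The flag isA selects M^A (True) or M^B (False); the
nat argument is the number of rounds of the protocol (recursion parameter).\<close>
primrec domm :: "bool \<Rightarrow> nat \<Rightarrow> proto \<Rightarrow> bool list \<Rightarrow> real" where
  "domm isA 0 P l =
     (if isA then (if out P l then 1 else 0) else (if out P l then 0 else 1))"
| "domm isA (Suc n) P l =
     (let b = hd l;
          mu = (\<lambda>c. case subp (Some P) [c] of None \<Rightarrow> 0
                     | Some Q \<Rightarrow> expect (Some Q) (domm isA n Q));
          s = (case subp (Some P) [b] of None \<Rightarrow> 0
                 | Some Q \<Rightarrow> domm isA n Q (tl l));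
          e = edge P [] b
      in if e = 0 then 0
         else if e = 1 then s
         else if 0 < e \<and> e < 1 \<and> (ctrlA P [] = isA \<or> mu b \<le> mu (\<not> b)) then s
         else (mu (\<not> b) / mu b) * s)"

fun dom_meas :: "bool \<Rightarrow> protoo \<Rightarrow> bool list \<Rightarrow> real" where
  "dom_meas isA None = (\<lambda>_. 0)"
| "dom_meas isA (Some P) = domm isA (rounds P) P"

fun cond_proto :: "protoo \<Rightarrow> (bool list \<Rightarrow> real) \<Rightarrow> protoo" where
  "cond_proto None M = None"
| "cond_proto (Some P) M =
     (if expect (Some P) M = 1 then None
      else Some (P\<lparr>edge := (\<lambda>u b.
         if expect_under (Some P) u M = 1 then 0
         else edge P u b * (1 - expect_under (Some P) (u @ [b]) M)
                / (1 - expect_under (Some P) u M))\<rparr>))"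

definition condA :: "protoo \<Rightarrow> protoo" where
  "condA X = cond_proto X (dom_meas True X)"

definition condB :: "protoo \<Rightarrow> protoo" where
  "condB X = cond_proto X (dom_meas False X)"

primrec seqA :: "protoo \<Rightarrow> nat \<Rightarrow> protoo" where
  "seqA P 0 = P"
| "seqA P (Suc j) = condB (condA (seqA P j))"

definition seqB :: "protoo \<Rightarrow> nat \<Rightarrow> protoo" where
  "seqB P j = condA (seqA P j)"

end

theory Submission
  imports Defs
begin

definition vp :: "proto \<Rightarrow> bool" where
  "vp P \<longleftrightarrow> (\<forall>u b. length u < rounds P \<longrightarrow> 0 \<le> edge P u b) \<and>
     (\<forall>u. length u < rounds P \<longrightarrow> visit P u \<noteq> 0 \<longrightarrow> edge P u True + edge P u False = 1)"

lemma valid_vp: "valid_proto P \<Longrightarrow> vp P"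
  by (auto simp: valid_proto_def vp_def)

lemma shift_simps[simp]:
  "rounds (shift P u) = rounds P - length u"
  "edge (shift P u) v b = edge P (u @ v) b"
  "ctrlA (shift P u) v = ctrlA P (u @ v)"
  "out (shift P u) v = out P (u @ v)"
  by (simp_all add: shift_def)

lemma shift_shift[simp]: "shift (shift P u) v = shift P (u @ v)"
  by (simp add: shift_def diff_diff_left)

lemma shift_Nil[simp]: "shift P [] = P"
  by (cases P) (simp add: shift_def)

lemma visit_Nil[simp]: "visit P [] = 1"
  by (simp add: visit_def)

lemma visit_snoc: "visit P (u @ [b]) = visit P u * edge P u b"
proof -
  have "visit P (u @ [b]) = (\<Prod>i<Suc (length u). edge P (take i (u @ [b])) ((u @ [b]) ! i))"
    by (simp add: visit_def)
  also have "\<dots> = (\<Prod>i<length u. edge P (take i (u @ [b])) ((u @ [b]) ! i)) * edge P u b"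
    by (simp add: prod.lessThan_Suc)
  also have "(\<Prod>i<length u. edge P (take i (u @ [b])) ((u @ [b]) ! i)) = visit P u"
    unfolding visit_def by (rule prod.cong) (auto simp: nth_append)
  finally show ?thesis .
qed

lemma visit_append: "visit P (u @ v) = visit P u * visit (shift P u) v"
proof (induction v rule: rev_induct)
  case Nil
  then show ?case by simp
next
  case (snoc b v)
  have "visit P (u @ v @ [b]) = visit P ((u @ v) @ [b])" by simp
  also have "\<dots> = visit P (u @ v) * edge P (u @ v) b" by (rule visit_snoc)
  also have "\<dots> = visit P u * visit (shift P u) (v @ [b])"
    using snoc by (simp add: visit_snoc)
  finally show ?case by simp
qed

lemma visit_single[simp]: "visit P [c] = edge P [] c"
  using visit_snoc[of P "[]" c] by simp

lemma visit_Cons: "visit P (c # v) = edge P [] c * visit (shift P [c]) v"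
  using visit_append[of P "[c]" v] by simp

lemma visit_nonneg:
  assumes "vp P" "length u \<le> rounds P"
  shows "0 \<le> visit P u"
  unfolding visit_def
  by (rule prod_nonneg) (use assms in \<open>auto simp: vp_def\<close>)

lemma vp_root:
  assumes "vp P" "0 < rounds P"
  shows "edge P [] c + edge P [] (\<not> c) = 1" "0 \<le> edge P [] c" "edge P [] c \<le> 1"
proof -
  have "edge P [] True + edge P [] False = 1" "0 \<le> edge P [] True" "0 \<le> edge P [] False"
    using assms by (auto simp: vp_def)
  then show "edge P [] c + edge P [] (\<not> c) = 1" "0 \<le> edge P [] c" "edge P [] c \<le> 1"
    by (cases c; simp)+
qed

lemma vp_shift:
  assumes "vp P" "visit P u \<noteq> 0"
  shows "vp (shift P u)"
  unfolding vp_def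
proof (intro conjI allI impI)
  fix v :: "bool list" and b assume "length v < rounds (shift P u)"
  then show "0 \<le> edge (shift P u) v b" using assms by (auto simp: vp_def)
next
  fix v :: "bool list" assume "length v < rounds (shift P u)" "visit (shift P u) v \<noteq> 0"
  then have "visit P (u @ v) \<noteq> 0" "length (u @ v) < rounds P"
    using assms by (auto simp: visit_append)
  then show "edge (shift P u) v True + edge (shift P u) v False = 1"
    using assms by (auto simp: vp_def)
qed

lemma finite_len: "finite {v :: bool list. length v = n}"
  using finite_lists_length_eq[of "UNIV :: bool set" n] by simp

lemma finite_leaves[simp]: "finite (leaves P)"
  by (simp add: leaves_def finite_len)

lemma leaves_Suc:
  assumes "rounds P = Suc n"
  shows "leaves P = Cons True ` {v. length v = n} \<union> Cons False ` {v. length v = n}"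
proof -
  have "l \<in> Cons True ` {v. length v = n} \<union> Cons False ` {v. length v = n}"
    if "length l = Suc n" for l :: "bool list"
  proof (cases l)
    case (Cons a w)
    then show ?thesis using that by (cases a) auto
  qed (use that in simp)
  then show ?thesis using assms by (auto simp: leaves_def)
qed

lemma leaves_0:
  assumes "rounds P = 0" shows "leaves P = {[]}"
  using assms by (auto simp: leaves_def)

lemma expect_0:
  assumes "rounds P = 0" shows "expect (Some P) M = M []"
  using assms by (simp add: leaves_0)

lemma expect_rec:
  assumes "rounds P = Suc n"
  shows "expect (Some P) M =
    edge P [] True * expect (Some (shift P [True])) (\<lambda>v. M (True # v)) +
    edge P [] False * expect (Some (shift P [False])) (\<lambda>v. M (False # v))"
proof -
  let ?L = "{v :: bool list. length v = n}"
  have lv: "leaves (shift P [c]) = ?L" for c using assms by (simp add: leaves_def)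
  have "expect (Some P) M = (\<Sum>l\<in>Cons True ` ?L \<union> Cons False ` ?L. visit P l * M l)"
    using leaves_Suc[OF assms] by simp
  also have "\<dots> = (\<Sum>l\<in>Cons True ` ?L. visit P l * M l) + (\<Sum>l\<in>Cons False ` ?L. visit P l * M l)"
    by (rule sum.union_disjoint) (auto simp: finite_len)
  also have hc: "(\<Sum>l\<in>Cons c ` ?L. visit P l * M l) = edge P [] c * expect (Some (shift P [c])) (\<lambda>v. M (c # v))" for c
    by (simp add: sum.reindex lv visit_Cons sum_distrib_left mult.assoc)
  have "(\<Sum>l\<in>Cons True ` ?L. visit P l * M l) + (\<Sum>l\<in>Cons False ` ?L. visit P l * M l) =
    edge P [] True * expect (Some (shift P [True])) (\<lambda>v. M (True # v)) +
    edge P [] False * expect (Some (shift P [False])) (\<lambda>v. M (False # v))"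
    by (simp only: hc)
  finally show ?thesis .
qed

lemma expect_rec':
  assumes "rounds P = Suc n"
  shows "expect (Some P) M =
    edge P [] c * expect (Some (shift P [c])) (\<lambda>v. M (c # v)) +
    edge P [] (\<not>c) * expect (Some (shift P [\<not>c])) (\<lambda>v. M ((\<not>c) # v))"
  using expect_rec[OF assms, of M] by (cases c) auto

lemma expect_mono:
  assumes "vp P" "\<And>l. length l = rounds P \<Longrightarrow> M l \<le> N l"
  shows "expect (Some P) M \<le> expect (Some P) N"
  using assms by (auto simp: leaves_def intro!: sum_mono mult_left_mono visit_nonneg)

lemma expect_cmult: "expect (Some P) (\<lambda>l. k * M l) = k * expect (Some P) M"
  by (simp add: sum_distrib_left mult.left_commute)

lemma expect_const0: "expect (Some P) (\<lambda>l. 0) = 0"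
  by simp

lemma expect_one: "vp P \<Longrightarrow> expect (Some P) (\<lambda>l. 1) = 1"
proof (induction "rounds P" arbitrary: P)
  case 0
  then have "rounds P = 0" by simp
  then show ?case by (simp add: leaves_0)
next
  case (Suc n)
  have "edge P [] c * expect (Some (shift P [c])) (\<lambda>v. 1) = edge P [] c" for c
  proof (cases "edge P [] c = 0")
    case False
    then have "vp (shift P [c])" using vp_shift[OF Suc.prems, of "[c]"] by simp
    moreover have "n = rounds (shift P [c])" using Suc.hyps by simp
    ultimately show ?thesis using Suc.hyps(1) by simp
  qed simp
  note h = this
  have "expect (Some P) (\<lambda>_. 1) = edge P [] True * expect (Some (shift P [True])) (\<lambda>v. 1) +
    edge P [] False * expect (Some (shift P [False])) (\<lambda>v. 1)"
    by (rule expect_rec[OF Suc.hyps(2)[symmetric]])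
  also have "\<dots> = edge P [] True + edge P [] False" by (simp only: h)
  also have "\<dots> = 1" using vp_root[OF Suc.prems, of True] Suc.hyps by simp
  finally show ?case .
qed


definition mu :: "bool \<Rightarrow> nat \<Rightarrow> proto \<Rightarrow> bool \<Rightarrow> real" where
  "mu isA n P c = (if edge P [] c = 0 then 0
      else expect (Some (shift P [c])) (domm isA n (shift P [c])))"

definition coef :: "bool \<Rightarrow> nat \<Rightarrow> proto \<Rightarrow> bool \<Rightarrow> real" where
  "coef isA n P c = (if edge P [] c = 0 then 0 else if edge P [] c = 1 then 1
     else if 0 < edge P [] c \<and> edge P [] c < 1 \<and>
       (ctrlA P [] = isA \<or> mu isA n P c \<le> mu isA n P (\<not> c)) then 1
     else mu isA n P (\<not> c) / mu isA n P c)"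

lemma subp_single: "subp (Some P) [c] = (if edge P [] c = 0 then None else Some (shift P [c]))"
  by simp

lemma mu_alt: "(\<lambda>c. case subp (Some P) [c] of None \<Rightarrow> 0
                     | Some Q \<Rightarrow> expect (Some Q) (domm isA n Q)) = mu isA n P"
  by (rule ext) (simp add: mu_def)

lemma dommS: "domm isA (Suc n) P (c # v) = coef isA n P c * domm isA n (shift P [c]) v"
  unfolding domm.simps(2) Let_def mu_alt
  by (auto simp: coef_def subp_single del: subp.simps)

declare domm.simps(2)[simp del]

lemma domm_bounds:
  "vp P \<Longrightarrow> rounds P = n \<Longrightarrow> length l = n \<Longrightarrow> 0 \<le> domm isA n P l \<and> domm isA n P l \<le> 1"
proof (induction n arbitrary: P l)
  case 0
  then show ?case by auto
next
  case (Suc n)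
  obtain c v where l: "l = c # v" using Suc.prems(3) by (cases l) auto
  have mu_nn: "0 \<le> mu isA n P d" for d
  proof (cases "edge P [] d = 0")
    case False
    then have vps: "vp (shift P [d])" using vp_shift[OF Suc.prems(1), of "[d]"] by simp
    have "expect (Some (shift P [d])) (\<lambda>_. 0) \<le> expect (Some (shift P [d])) (domm isA n (shift P [d]))"
      by (rule expect_mono[OF vps]) (use Suc.IH[OF vps] Suc.prems in auto)
    then show ?thesis using False by (simp add: mu_def)
  qed (simp add: mu_def)
  have e: "0 \<le> edge P [] c" "edge P [] c \<le> 1" using vp_root[OF Suc.prems(1)] Suc.prems by auto
  have cb: "0 \<le> coef isA n P c \<and> coef isA n P c \<le> 1"
    using e mu_nn[of c] mu_nn[of "\<not>c"]
    by (auto simp: coef_def divide_le_eq_1 intro: divide_nonneg_nonneg)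
  show ?case
  proof (cases "edge P [] c = 0")
    case True
    then show ?thesis by (simp add: l dommS coef_def)
  next
    case False
    then have vps: "vp (shift P [c])" using vp_shift[OF Suc.prems(1), of "[c]"] by simp
    have "0 \<le> domm isA n (shift P [c]) v \<and> domm isA n (shift P [c]) v \<le> 1"
      by (rule Suc.IH[OF vps]) (use Suc.prems l in auto)
    then show ?thesis using cb by (simp add: l dommS mult_le_one)
  qed
qed

lemma domm_nonneg: "vp P \<Longrightarrow> length l = rounds P \<Longrightarrow> 0 \<le> domm isA (rounds P) P l"
  using domm_bounds by blast

lemma domm_le1: "vp P \<Longrightarrow> length l = rounds P \<Longrightarrow> domm isA (rounds P) P l \<le> 1"
  using domm_bounds by blast

lemma expect_nonneg: "vp P \<Longrightarrow> (\<And>l. length l = rounds P \<Longrightarrow> 0 \<le> M l) \<Longrightarrow> 0 \<le> expect (Some P) M"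
  using expect_mono[of P "\<lambda>_. 0" M] by simp

lemma mu_nonneg:
  assumes "vp P" "rounds P = Suc n"
  shows "0 \<le> mu isA n P d"
proof (cases "edge P [] d = 0")
  case False
  then have vps: "vp (shift P [d])" using vp_shift[OF assms(1), of "[d]"] by simp
  show ?thesis using False expect_nonneg[OF vps] domm_nonneg[OF vps] assms
    by (simp add: mu_def)
qed (simp add: mu_def)

lemma coef_nonneg:
  assumes "vp P" "rounds P = Suc n"
  shows "0 \<le> coef isA n P c"
  using mu_nonneg[OF assms, of isA c] mu_nonneg[OF assms, of isA "\<not>c"]
  by (auto simp: coef_def intro: divide_nonneg_nonneg)

lemma expect_domm_Suc:
  assumes "rounds P = Suc n"
  shows "expect (Some P) (domm isA (Suc n) P) =
    edge P [] c * coef isA n P c * mu isA n P c +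
    edge P [] (\<not>c) * coef isA n P (\<not>c) * mu isA n P (\<not>c)"
proof -
  have t: "edge P [] d * expect (Some (shift P [d])) (\<lambda>v. domm isA (Suc n) P (d # v)) =
    edge P [] d * coef isA n P d * mu isA n P d" for d
  proof -
    have "expect (Some (shift P [d])) (\<lambda>v. domm isA (Suc n) P (d # v)) =
      expect (Some (shift P [d])) (\<lambda>v. coef isA n P d * domm isA n (shift P [d]) v)"
      by (simp only: dommS)
    also have "\<dots> = coef isA n P d * expect (Some (shift P [d])) (domm isA n (shift P [d]))"
      by (rule expect_cmult)
    finally show ?thesis by (simp add: mu_def)
  qed
  have "expect (Some P) (domm isA (Suc n) P) =
    edge P [] c * expect (Some (shift P [c])) (\<lambda>v. domm isA (Suc n) P (c # v)) +
    edge P [] (\<not>c) * expect (Some (shift P [\<not>c])) (\<lambda>v. domm isA (Suc n) P ((\<not>c) # v))"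
    by (rule expect_rec'[OF assms])
  also have "\<dots> = edge P [] c * coef isA n P c * mu isA n P c +
    edge P [] (\<not>c) * coef isA n P (\<not>c) * mu isA n P (\<not>c)"
    by (simp only: t)
  finally show ?thesis .
qed

lemma term_nonneg:
  assumes "vp P" "rounds P = Suc n"
  shows "0 \<le> edge P [] d * coef isA n P d * mu isA n P d"
  using vp_root[OF assms(1)] assms coef_nonneg[OF assms] mu_nonneg[OF assms] by simp

lemma C1:
  "vp P \<Longrightarrow> rounds P = n \<Longrightarrow> 0 < expect (Some P) (domm isA n P) \<Longrightarrow>
    \<exists>l. length l = n \<and> 0 < visit P l \<and> domm isA n P l = 1"
proof (induction n arbitrary: P)
  case 0
  have "expect (Some P) (domm isA 0 P) = domm isA 0 P []" using 0 by (intro expect_0) simp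
  then have "0 < domm isA 0 P []" using 0 by simp
  then have "domm isA 0 P [] = 1" by (simp only: domm.simps(1)) (auto split: if_splits)
  then show ?case by (intro exI[of _ "[]"]) simp
next
  case (Suc n)
  note vp = Suc.prems(1) and r = Suc.prems(2)
  have ex: "\<exists>c. 0 < edge P [] c * coef isA n P c * mu isA n P c"
  proof (rule ccontr)
    assume "\<not> ?thesis"
    then have a: "edge P [] d * coef isA n P d * mu isA n P d \<le> 0" for d
      by (simp add: not_less)
    have "edge P [] True * coef isA n P True * mu isA n P True +
      edge P [] (\<not>True) * coef isA n P (\<not>True) * mu isA n P (\<not>True) \<le> 0"
      using a[of True] a[of "\<not>True"] by linarith
    then show False using Suc.prems(3) expect_domm_Suc[OF r, of isA True] by linarith
  qed
  have IH': "\<exists>v. length v = n \<and> 0 < visit P (d # v) \<and> domm isA (Suc n) P (d # v) = 1"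
    if "0 < mu isA n P d" "coef isA n P d = 1" for d
  proof -
    have ed: "edge P [] d \<noteq> 0" using that by (auto simp: mu_def)
    then have ed': "0 < edge P [] d" using vp_root[OF vp, of d] r by simp
    have vps: "vp (shift P [d])" using vp_shift[OF vp, of "[d]"] ed by simp
    have m: "0 < expect (Some (shift P [d])) (domm isA n (shift P [d]))"
      using that(1) ed unfolding mu_def by simp
    have rs: "rounds (shift P [d]) = n" using r by simp
    obtain v where v: "length v = n" "0 < visit (shift P [d]) v" "domm isA n (shift P [d]) v = 1"
      using Suc.IH[OF vps rs m] by blast
    show ?thesis
    proof (intro exI[of _ v] conjI)
      show "length v = n" by (rule v(1))
      show "0 < visit P (d # v)" using v(2) ed' by (simp add: visit_Cons)
      show "domm isA (Suc n) P (d # v) = 1" using v(3) that(2) by (simp add: dommS)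
    qed
  qed
  obtain c where c: "0 < edge P [] c * coef isA n P c * mu isA n P c" using ex by blast
  have ec: "0 \<le> edge P [] c" using vp_root[OF vp] r by simp
  have cc: "0 \<le> coef isA n P c" using coef_nonneg[OF vp r] .
  have mc: "0 \<le> mu isA n P c" using mu_nonneg[OF vp r] .
  have nz: "edge P [] c \<noteq> 0" "coef isA n P c \<noteq> 0" "mu isA n P c \<noteq> 0"
    using c by auto
  have pos: "0 < edge P [] c" "0 < coef isA n P c" "0 < mu isA n P c"
    using nz ec cc mc by linarith+
  show ?case
  proof (cases "coef isA n P c = 1")
    case True
    then obtain v where "length v = n" "0 < visit P (c # v)" "domm isA (Suc n) P (c # v) = 1"
      using IH'[of c] pos by blast
    then show ?thesis by (intro exI[of _ "c # v"]) simp
  next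
    case False
    have er: "edge P [] c + edge P [] (\<not>c) = 1" "edge P [] c \<le> 1" using vp_root[OF vp] r by auto
    have e1: "edge P [] c \<noteq> 1"
    proof
      assume "edge P [] c = 1"
      then have "coef isA n P c = 1" by (simp add: coef_def)
      then show False using False by simp
    qed
    have e01: "0 < edge P [] c" "edge P [] c < 1" using pos(1) e1 er(2) by linarith+
    have ncond: "\<not> (ctrlA P [] = isA \<or> mu isA n P c \<le> mu isA n P (\<not> c))"
    proof
      assume "ctrlA P [] = isA \<or> mu isA n P c \<le> mu isA n P (\<not> c)"
      then have "coef isA n P c = 1" using e01 unfolding coef_def by simp
      then show False using False by simp
    qed
    have cases: "0 < edge P [] c" "edge P [] c < 1"
        "mu isA n P (\<not>c) < mu isA n P c" "coef isA n P c = mu isA n P (\<not> c) / mu isA n P c"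
      using e01 ncond nz(1) e1 unfolding coef_def by simp_all
    then have m2: "0 < mu isA n P (\<not>c)" using pos by (simp add: zero_less_divide_iff)
    have e2: "0 < edge P [] (\<not>c)" "edge P [] (\<not>c) < 1" using cases er by linarith+
    have "coef isA n P (\<not>c) = 1"
      using e2 cases(3) unfolding coef_def by simp
    then obtain v where "length v = n" "0 < visit P ((\<not>c) # v)" "domm isA (Suc n) P ((\<not>c) # v) = 1"
      using IH'[of "\<not>c"] m2 by blast
    then show ?thesis by (intro exI[of _ "(\<not>c) # v"]) simp
  qed
qed

lemma C3:
  "vp P \<Longrightarrow> rounds P = n \<Longrightarrow>
    0 < expect (Some P) (domm True n P) \<or> 0 < expect (Some P) (domm False n P)"
proof (induction n arbitrary: P)
  case 0
  have h: "expect (Some P) (domm b 0 P) = domm b 0 P []" for b using 0 by (intro expect_0) simp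
  have "0 < domm True 0 P [] \<or> 0 < domm False 0 P []" by (simp only: domm.simps(1)) auto
  then show ?case unfolding h .
next
  case (Suc n)
  note vp = Suc.prems(1) and r = Suc.prems(2)
  have IHd: "0 < mu True n P d \<or> 0 < mu False n P d" if "edge P [] d \<noteq> 0" for d
  proof -
    have vps: "vp (shift P [d])" using vp_shift[OF vp, of "[d]"] that by simp
    show ?thesis using Suc.IH[OF vps] r that by (simp add: mu_def)
  qed
  have X: "edge P [] d * coef isA n P d * mu isA n P d \<le> expect (Some P) (domm isA (Suc n) P)" for d isA
    using expect_domm_Suc[OF r, of isA d] term_nonneg[OF vp r, of "\<not>d" isA] by simp
  have pos1: "0 < expect (Some P) (domm isA (Suc n) P)"
    if "0 < edge P [] d" "coef isA n P d = 1" "0 < mu isA n P d" for d isA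
  proof -
    have "0 < edge P [] d * coef isA n P d * mu isA n P d" using that by simp
    then show ?thesis using X[of d isA] by linarith
  qed
  have er: "edge P [] d + edge P [] (\<not>d) = 1" "0 \<le> edge P [] d" "edge P [] d \<le> 1" for d
    using vp_root[OF vp] r by auto
  have "0 < edge P [] True \<or> 0 < edge P [] False" using er[of True] by auto
  then obtain c where ec: "0 < edge P [] c" by blast
  have "\<exists>isA. 0 < expect (Some P) (domm isA (Suc n) P)"
  proof (cases "edge P [] c = 1")
    case True
    then have co: "coef isA n P c = 1" for isA by (simp add: coef_def)
    have "edge P [] c \<noteq> 0" using ec by simp
    then have "0 < mu True n P c \<or> 0 < mu False n P c" by (rule IHd)
    then show ?thesis
    proof
      assume "0 < mu True n P c"
      then show ?thesis using pos1[OF ec co] by blast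
    next
      assume "0 < mu False n P c"
      then show ?thesis using pos1[OF ec co] by blast
    qed
  next
    case False
    have b1: "0 < edge P [] c" "edge P [] c < 1" "0 < edge P [] (\<not>c)" "edge P [] (\<not>c) < 1"
      using ec er[of c] False by linarith+
    define k where "k = ctrlA P []"
    have ck: "coef k n P d = 1" if "0 < edge P [] d" "edge P [] d < 1" for d
      using that unfolding coef_def k_def by simp
    show ?thesis
    proof (cases "0 < mu k n P c \<or> 0 < mu k n P (\<not>c)")
      case True
      then show ?thesis
      proof
        assume "0 < mu k n P c"
        then show ?thesis using pos1[OF b1(1) ck[OF b1(1,2)]] by blast
      next
        assume "0 < mu k n P (\<not>c)"
        then show ?thesis using pos1[OF b1(3) ck[OF b1(3,4)]] by blast
      qed
    next
      case False
      then have z: "mu k n P c = 0" "mu k n P (\<not>c) = 0"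
        using mu_nonneg[OF vp r, of k c] mu_nonneg[OF vp r, of k "\<not>c"] by linarith+
      have p: "0 < mu (\<not>k) n P d" if "edge P [] d \<noteq> 0" "mu k n P d = 0" for d
      proof (cases k)
        case True
        then show ?thesis using IHd[OF that(1)] that(2) by simp
      next
        case False
        then show ?thesis using IHd[OF that(1)] that(2) by simp
      qed
      have pc: "0 < mu (\<not>k) n P c" using p[OF _ z(1)] b1 by simp
      have pnc: "0 < mu (\<not>k) n P (\<not>c)" using p[OF _ z(2)] b1 by simp
      show ?thesis
      proof (cases "mu (\<not>k) n P c \<le> mu (\<not>k) n P (\<not>c)")
        case True
        then have "coef (\<not>k) n P c = 1" using b1(1,2) unfolding coef_def by simp
        then show ?thesis using pos1[OF b1(1) _ pc] by blast
      next
        case False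
        then have "mu (\<not>k) n P (\<not>c) \<le> mu (\<not>k) n P (\<not>\<not>c)" by simp
        then have "coef (\<not>k) n P (\<not>c) = 1" using b1(3,4) unfolding coef_def by simp
        then show ?thesis using pos1[OF b1(3) _ pnc] by blast
      qed
    qed
  qed
  then obtain isA where "0 < expect (Some P) (domm isA (Suc n) P)" by blast
  then show ?case by (cases isA) (simp_all del: expect.simps)
qed


definition condE :: "proto \<Rightarrow> (bool list \<Rightarrow> real) \<Rightarrow> bool list \<Rightarrow> bool \<Rightarrow> real" where
  "condE P M = (\<lambda>u b.
         if expect_under (Some P) u M = 1 then 0
         else edge P u b * (1 - expect_under (Some P) (u @ [b]) M)
                / (1 - expect_under (Some P) u M))"

lemma cond_some: "expect (Some P) M \<noteq> 1 \<Longrightarrow> cond_proto (Some P) M = Some (P\<lparr>edge := condE P M\<rparr>)"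
  unfolding condE_def by simp

lemma F_none: "visit P u = 0 \<Longrightarrow> expect_under (Some P) u M = 0"
  by (simp add: expect_under_def)

lemma F_some: "visit P u \<noteq> 0 \<Longrightarrow> expect_under (Some P) u M = expect (Some (shift P u)) (\<lambda>v. M (u @ v))"
  by (simp add: expect_under_def del: expect.simps)

lemma F_root: "expect_under (Some P) [] M = expect (Some P) M"
  by (simp add: expect_under_def del: expect.simps)

lemma F_leaf:
  assumes "length u = rounds P"
  shows "expect_under (Some P) u M = (if visit P u = 0 then 0 else M u)"
proof (cases "visit P u = 0")
  case False
  have "rounds (shift P u) = 0" using assms by simp
  then have "leaves (shift P u) = {[]}" by (rule leaves_0)
  then show ?thesis using False by (simp add: F_some)
qed (simp add: F_none)

lemma F_rec:
  assumes "length u < rounds P"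
  shows "expect_under (Some P) u M = edge P u True * expect_under (Some P) (u @ [True]) M
     + edge P u False * expect_under (Some P) (u @ [False]) M"
proof (cases "visit P u = 0")
  case True
  then show ?thesis by (simp add: F_none visit_snoc)
next
  case False
  have r: "rounds (shift P u) = Suc (rounds P - length u - 1)" using assms by simp
  have t: "edge P u c * expect_under (Some P) (u @ [c]) M =
    edge (shift P u) [] c * expect (Some (shift (shift P u) [c])) (\<lambda>v. M (u @ c # v))" for c
  proof (cases "edge P u c = 0")
    case False': False
    then have "visit P (u @ [c]) \<noteq> 0" using False by (simp add: visit_snoc)
    then show ?thesis by (simp add: F_some del: expect.simps)
  qed simp
  have "expect_under (Some P) u M = expect (Some (shift P u)) (\<lambda>v. M (u @ v))"
    using False by (rule F_some)
  also have "\<dots> = edge (shift P u) [] True * expect (Some (shift (shift P u) [True])) (\<lambda>v. M (u @ True # v)) +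
    edge (shift P u) [] False * expect (Some (shift (shift P u) [False])) (\<lambda>v. M (u @ False # v))"
    by (rule expect_rec[OF r])
  also have "\<dots> = edge P u True * expect_under (Some P) (u @ [True]) M
     + edge P u False * expect_under (Some P) (u @ [False]) M"
    by (simp only: t)
  finally show ?thesis .
qed

definition mbound :: "proto \<Rightarrow> (bool list \<Rightarrow> real) \<Rightarrow> bool" where
  "mbound P M \<longleftrightarrow> (\<forall>l. length l = rounds P \<longrightarrow> 0 \<le> M l \<and> M l \<le> 1)"

lemma F_bounds:
  assumes "vp P" "mbound P M" "length u \<le> rounds P"
  shows "0 \<le> expect_under (Some P) u M \<and> expect_under (Some P) u M \<le> 1"
proof (cases "visit P u = 0")
  case False
  have vps: "vp (shift P u)" using vp_shift[OF assms(1) False] .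
  have "expect (Some (shift P u)) (\<lambda>_. 0) \<le> expect (Some (shift P u)) (\<lambda>v. M (u @ v))"
    by (rule expect_mono[OF vps]) (use assms in \<open>auto simp: mbound_def\<close>)
  moreover have "expect (Some (shift P u)) (\<lambda>v. M (u @ v)) \<le> expect (Some (shift P u)) (\<lambda>_. 1)"
    by (rule expect_mono[OF vps]) (use assms in \<open>auto simp: mbound_def\<close>)
  ultimately show ?thesis using False expect_one[OF vps] expect_const0[of "shift P u"]
    by (simp add: F_some del: expect.simps)
qed (simp add: F_none)

lemma E_le1: "vp P \<Longrightarrow> mbound P M \<Longrightarrow> expect (Some P) M \<le> 1"
  using F_bounds[of P M "[]"] by (simp add: F_root)

lemma F_sub:
  assumes "vp P" "length u < rounds P" "visit P u \<noteq> 0"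
  shows "1 - expect_under (Some P) u M =
    edge P u True * (1 - expect_under (Some P) (u @ [True]) M) +
    edge P u False * (1 - expect_under (Some P) (u @ [False]) M)"
proof -
  have "edge P u True + edge P u False = 1" using assms by (auto simp: vp_def)
  then show ?thesis using F_rec[OF assms(2), of M] by (simp add: algebra_simps)
qed

lemma cond_visit:
  assumes vp: "vp P" and mb: "mbound P M" and E: "expect (Some P) M \<noteq> 1"
  shows "length u \<le> rounds P \<Longrightarrow>
    visit (P\<lparr>edge := condE P M\<rparr>) u * (1 - expect (Some P) M) =
    visit P u * (1 - expect_under (Some P) u M)"
proof (induction u rule: rev_induct)
  case Nil
  then show ?case by (simp add: F_root)
next
  case (snoc b u)
  let ?P' = "P\<lparr>edge := condE P M\<rparr>"
  let ?F = "\<lambda>u. expect_under (Some P) u M"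
  have lu: "length u < rounds P" using snoc.prems by simp
  have IH: "visit ?P' u * (1 - expect (Some P) M) = visit P u * (1 - ?F u)"
    using snoc.IH lu by simp
  have Fb: "0 \<le> ?F w \<and> ?F w \<le> 1" if "length w \<le> rounds P" for w
    using F_bounds[OF vp mb that] .
  have eb: "0 \<le> edge P u d" for d using vp lu by (auto simp: vp_def)
  show ?case
  proof (cases "?F u = 1")
    case True
    have "visit P u * edge P u b * (1 - ?F (u @ [b])) = 0"
    proof (cases "visit P u = 0")
      case False
      have s: "0 = edge P u True * (1 - ?F (u @ [True])) + edge P u False * (1 - ?F (u @ [False]))"
        using F_sub[OF vp lu False, of M] True by simp
      have n: "0 \<le> edge P u d * (1 - ?F (u @ [d]))" for d
        using eb[of d] Fb[of "u @ [d]"] lu by simp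
      have z: "edge P u True * (1 - ?F (u @ [True])) = 0 \<and> edge P u False * (1 - ?F (u @ [False])) = 0"
        using s n[of True] n[of False] by linarith
      have "edge P u d * (1 - ?F (u @ [d])) = 0" for d
        using z by (cases d) simp_all
      then show ?thesis by simp
    qed simp
    then show ?thesis using True by (simp add: visit_snoc condE_def)
  next
    case False
    then have ne: "1 - ?F u \<noteq> 0" by simp
    have "visit ?P' (u @ [b]) * (1 - expect (Some P) M) =
      (visit ?P' u * (1 - expect (Some P) M)) * condE P M u b"
      by (simp add: visit_snoc)
    also have "\<dots> = visit P u * (1 - ?F u) * (edge P u b * (1 - ?F (u @ [b])) / (1 - ?F u))"
      using IH False by (simp add: condE_def)
    also have "\<dots> = visit P (u @ [b]) * (1 - ?F (u @ [b]))"
      using ne by (simp add: visit_snoc)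
    finally show ?thesis .
  qed
qed

lemma cond_leaf:
  assumes vp: "vp P" and mb: "mbound P M" and E: "expect (Some P) M \<noteq> 1"
    and l: "length l = rounds P"
  shows "visit (P\<lparr>edge := condE P M\<rparr>) l * (1 - expect (Some P) M) = visit P l * (1 - M l)"
  using cond_visit[OF vp mb E, of l] l by (simp add: F_leaf)

lemma cond_vp:
  assumes vp: "vp P" and mb: "mbound P M" and E: "expect (Some P) M \<noteq> 1"
  shows "vp (P\<lparr>edge := condE P M\<rparr>)"
  unfolding vp_def
proof (intro conjI allI impI)
  let ?F = "\<lambda>u. expect_under (Some P) u M"
  fix u :: "bool list" and b assume lu: "length u < rounds (P\<lparr>edge := condE P M\<rparr>)"
  then have lu': "length u < rounds P" by simp
  have "0 \<le> ?F (u @ [b]) \<and> ?F (u @ [b]) \<le> 1" "0 \<le> ?F u \<and> ?F u \<le> 1"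
    using F_bounds[OF vp mb, of "u @ [b]"] F_bounds[OF vp mb, of u] lu' by auto
  moreover have "0 \<le> edge P u b" using vp lu' by (auto simp: vp_def)
  ultimately show "0 \<le> edge (P\<lparr>edge := condE P M\<rparr>) u b"
    by (auto simp: condE_def intro!: divide_nonneg_nonneg)
next
  let ?F = "\<lambda>u. expect_under (Some P) u M"
  fix u :: "bool list" assume lu: "length u < rounds (P\<lparr>edge := condE P M\<rparr>)"
    and nz: "visit (P\<lparr>edge := condE P M\<rparr>) u \<noteq> 0"
  then have lu': "length u < rounds P" by simp
  have e1: "1 - expect (Some P) M \<noteq> 0" using E by simp
  have "visit P u * (1 - ?F u) = visit (P\<lparr>edge := condE P M\<rparr>) u * (1 - expect (Some P) M)"
    using cond_visit[OF vp mb E, of u] lu' by simp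
  also have "\<dots> \<noteq> 0" using e1 nz by simp
  finally have "visit P u * (1 - ?F u) \<noteq> 0" .
  then have v: "visit P u \<noteq> 0" and f: "1 - ?F u \<noteq> 0" by auto
  have "edge (P\<lparr>edge := condE P M\<rparr>) u True + edge (P\<lparr>edge := condE P M\<rparr>) u False =
    (edge P u True * (1 - ?F (u @ [True])) + edge P u False * (1 - ?F (u @ [False]))) / (1 - ?F u)"
    using f by (simp add: condE_def add_divide_distrib)
  also have "\<dots> = 1" using F_sub[OF vp lu' v, of M] f by simp
  finally show "edge (P\<lparr>edge := condE P M\<rparr>) u True + edge (P\<lparr>edge := condE P M\<rparr>) u False = 1" .
qed

lemma cond_supp:
  assumes vp: "vp P" and mb: "mbound P M" and E: "expect (Some P) M \<noteq> 1"
    and l: "length l = rounds P"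
  shows "(0 < visit (P\<lparr>edge := condE P M\<rparr>) l) = (0 < visit P l \<and> M l \<noteq> 1)"
proof -
  have E1: "0 < 1 - expect (Some P) M" using E E_le1[OF vp mb] by simp
  have "visit (P\<lparr>edge := condE P M\<rparr>) l = visit P l * (1 - M l) / (1 - expect (Some P) M)"
    using cond_leaf[OF vp mb E l] E1 by (simp add: eq_divide_eq)
  moreover have "0 \<le> visit P l" using visit_nonneg[OF vp] l by simp
  moreover have "M l \<le> 1" using mb l by (simp add: mbound_def)
  ultimately show ?thesis using E1
    by (auto simp: zero_less_divide_iff zero_less_mult_iff)
qed

definition agree :: "proto \<Rightarrow> proto \<Rightarrow> bool" where
  "agree P Q \<longleftrightarrow> rounds P = rounds Q \<and>
    (\<forall>u. length u < rounds P \<longrightarrow> ctrlA P u = ctrlA Q u \<and> edge P u = edge Q u) \<and>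
    (\<forall>l. length l = rounds P \<longrightarrow> out P l = out Q l)"

lemma cond_zero:
  assumes vp: "vp P" and mb: "mbound P M" and E: "expect (Some P) M = 0"
  shows "agree P (P\<lparr>edge := condE P M\<rparr>)"
proof -
  let ?F = "\<lambda>u. expect_under (Some P) u M"
  have Fb: "0 \<le> ?F w \<and> ?F w \<le> 1" if "length w \<le> rounds P" for w
    using F_bounds[OF vp mb that] .
  have F0: "length u \<le> rounds P \<Longrightarrow> ?F u = 0" for u
  proof (induction u rule: rev_induct)
    case Nil
    then show ?case using E by (simp add: F_root)
  next
    case (snoc b u)
    have lu: "length u < rounds P" using snoc.prems by simp
    show ?case
    proof (cases "visit P (u @ [b]) = 0")
      case True
      then show ?thesis by (simp add: F_none)
    next
      case False
      then have eb: "edge P u b \<noteq> 0" by (simp add: visit_snoc)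
      have en: "0 \<le> edge P u d" for d using vp lu by (auto simp: vp_def)
      have s: "0 = edge P u True * ?F (u @ [True]) + edge P u False * ?F (u @ [False])"
        using F_rec[OF lu, of M] snoc.IH lu by simp
      have n: "0 \<le> edge P u d * ?F (u @ [d])" for d
        using en[of d] Fb[of "u @ [d]"] lu by simp
      have z: "edge P u True * ?F (u @ [True]) = 0 \<and> edge P u False * ?F (u @ [False]) = 0"
        using s n[of True] n[of False] by linarith
      have "edge P u d * ?F (u @ [d]) = 0" for d
        using z by (cases d) simp_all
      then have "edge P u b * ?F (u @ [b]) = 0" .
      then show ?thesis using eb by simp
    qed
  qed
  have "condE P M u = edge P u" if "length u < rounds P" for u
  proof
    fix b
    show "condE P M u b = edge P u b"
      using F0[of u] F0[of "u @ [b]"] that by (simp add: condE_def)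
  qed
  then show ?thesis by (simp add: agree_def)
qed

lemma agree_visit:
  assumes "agree P Q" "length u \<le> rounds P"
  shows "visit P u = visit Q u"
  unfolding visit_def
proof (rule prod.cong)
  fix i assume "i \<in> {..<length u}"
  then have "length (take i u) < rounds P" using assms(2) by simp
  then show "edge P (take i u) (u ! i) = edge Q (take i u) (u ! i)"
    using assms(1) by (simp add: agree_def)
qed simp

lemma agree_expect:
  assumes "agree P Q" "\<And>l. length l = rounds P \<Longrightarrow> M l = N l"
  shows "expect (Some P) M = expect (Some Q) N"
proof -
  have lv: "leaves Q = leaves P" using assms(1) by (simp add: agree_def leaves_def)
  show ?thesis unfolding expect.simps lv
    by (rule sum.cong) (use assms agree_visit in \<open>auto simp: leaves_def\<close>)
qed

lemma agree_shift:
  assumes "agree P Q" "rounds P = Suc n"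
  shows "agree (shift P [c]) (shift Q [c])"
  using assms by (auto simp: agree_def)

lemma agree_domm:
  "agree P Q \<Longrightarrow> rounds P = n \<Longrightarrow> length l = n \<Longrightarrow> domm isA n P l = domm isA n Q l"
proof (induction n arbitrary: P Q l)
  case 0
  then show ?case by (simp add: agree_def)
next
  case (Suc n)
  obtain c v where l: "l = c # v" using Suc.prems(3) by (cases l) auto
  have sh: "agree (shift P [d]) (shift Q [d])" for d using agree_shift Suc.prems by blast
  have rs: "rounds (shift P [d]) = n" for d using Suc.prems by simp
  have root: "edge P [] = edge Q []" "ctrlA P [] = ctrlA Q []"
    using Suc.prems by (auto simp: agree_def)
  have dm: "domm isA n (shift P [d]) w = domm isA n (shift Q [d]) w" if "length w = n" for d w
    using Suc.IH[OF sh rs that] .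
  have mu: "mu isA n P d = mu isA n Q d" for d
  proof -
    have "expect (Some (shift P [d])) (domm isA n (shift P [d])) =
      expect (Some (shift Q [d])) (domm isA n (shift Q [d]))"
      by (rule agree_expect[OF sh]) (use dm rs in auto)
    then show ?thesis by (simp add: mu_def root)
  qed
  have co: "coef isA n P c = coef isA n Q c"
    by (simp add: coef_def root mu)
  show ?case using dm[of v] Suc.prems l by (simp add: dommS co)
qed


definition supp :: "nat \<Rightarrow> proto \<Rightarrow> bool list set" where
  "supp m Q = {l. length l = m \<and> 0 < visit Q l}"

lemma supp_finite: "finite (supp m Q)"
  by (rule finite_subset[OF _ finite_len[of m]]) (auto simp: supp_def)

lemma supp_nonempty:
  assumes "vp Q" "rounds Q = m"
  shows "supp m Q \<noteq> {}"
proof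
  assume e: "supp m Q = {}"
  have "\<forall>l\<in>leaves Q. visit Q l = 0"
  proof
    fix l assume "l \<in> leaves Q"
    then have "length l = m" using assms by (simp add: leaves_def)
    then show "visit Q l = 0" using e visit_nonneg[OF assms(1), of l] assms
      by (force simp: supp_def)
  qed
  then have "expect (Some Q) (\<lambda>_. 1) = 0" by simp
  then show False using expect_one[OF assms(1)] by simp
qed

lemma domm_mbound: "vp Q \<Longrightarrow> rounds Q = m \<Longrightarrow> mbound Q (domm isA m Q)"
  using domm_bounds by (auto simp: mbound_def)

lemma step_lemma:
  assumes vp: "vp Q" and r: "rounds Q = m"
    and EA: "expect (Some Q) (domm True m Q) \<noteq> 1"
    and EB: "expect (condA (Some Q)) (dom_meas False (condA (Some Q))) \<noteq> 1"
  shows "\<exists>Q'. condB (condA (Some Q)) = Some Q' \<and> vp Q' \<and> rounds Q' = m \<and>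
    card (supp m Q') < card (supp m Q)"
proof -
  define MA where "MA = domm True m Q"
  have mbA: "mbound Q MA" using domm_mbound[OF vp r] by (simp add: MA_def)
  define QB where "QB = Q\<lparr>edge := condE Q MA\<rparr>"
  have cA: "condA (Some Q) = Some QB"
    using cond_some[of Q MA] EA r by (simp add: condA_def QB_def MA_def del: cond_proto.simps)
  have vpB: "vp QB" using cond_vp[OF vp mbA] EA by (simp add: QB_def MA_def)
  have rB: "rounds QB = m" using r by (simp add: QB_def)
  have suppB: "supp m QB = {l \<in> supp m Q. MA l \<noteq> 1}"
    using cond_supp[OF vp mbA] EA r by (auto simp: supp_def QB_def MA_def)
  define MB where "MB = domm False m QB"
  have mbB: "mbound QB MB" using domm_mbound[OF vpB rB] by (simp add: MB_def)
  have EB': "expect (Some QB) MB \<noteq> 1" using EB cA rB by (simp add: MB_def del: expect.simps)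
  define QA where "QA = QB\<lparr>edge := condE QB MB\<rparr>"
  have cB: "condB (Some QB) = Some QA"
    using cond_some[of QB MB] EB' rB by (simp add: condB_def QA_def MB_def del: cond_proto.simps)
  have vpA: "vp QA" using cond_vp[OF vpB mbB EB'] by (simp add: QA_def)
  have rA: "rounds QA = m" using rB by (simp add: QA_def)
  have suppA: "supp m QA = {l \<in> supp m QB. MB l \<noteq> 1}"
    using cond_supp[OF vpB mbB EB'] rB by (auto simp: supp_def QA_def)
  have "\<exists>l. l \<in> supp m Q \<and> l \<notin> supp m QA"
  proof (cases "0 < expect (Some Q) MA")
    case True
    then obtain l where "length l = m" "0 < visit Q l" "MA l = 1"
      using C1[OF vp r] by (auto simp: MA_def)
    then show ?thesis using suppA suppB by (auto simp: supp_def)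
  next
    case False
    then have E0: "expect (Some Q) MA = 0"
      using expect_nonneg[OF vp, of MA] mbA r by (force simp: mbound_def)
    have ag: "agree Q QB" using cond_zero[OF vp mbA E0] by (simp add: QB_def)
    have "expect (Some QB) (domm True m QB) = expect (Some Q) MA"
      by (rule agree_expect[symmetric, OF ag])
         (use agree_domm[OF ag] r in \<open>auto simp: MA_def\<close>)
    then have "\<not> 0 < expect (Some QB) (domm True m QB)" using E0 by simp
    then have "0 < expect (Some QB) MB" using C3[OF vpB rB] by (simp add: MB_def)
    then obtain l where "length l = m" "0 < visit QB l" "MB l = 1"
      using C1[OF vpB rB] by (auto simp: MB_def)
    then show ?thesis using suppA suppB by (auto simp: supp_def)
  qed
  then have "supp m QA \<subset> supp m Q" using suppA suppB by blast
  then have "card (supp m QA) < card (supp m Q)" by (rule psubset_card_mono[OF supp_finite])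
  then show ?thesis using cA cB vpA rA by auto
qed

theorem lemma3p44:
  fixes P :: proto
  assumes "valid_proto P"
  shows "\<exists>j. expect (seqA (Some P) j) (dom_meas True (seqA (Some P) j)) = 1
           \<or> expect (seqB (Some P) j) (dom_meas False (seqB (Some P) j)) = 1"
proof (rule ccontr)
  assume H: "\<not> ?thesis"
  define m where "m = rounds P"
  have inv: "\<exists>Q. seqA (Some P) j = Some Q \<and> vp Q \<and> rounds Q = m \<and> card (supp m Q) + j \<le> card (supp m P)" for j
  proof (induction j)
    case 0
    then show ?case using valid_vp[OF assms] by (simp add: m_def)
  next
    case (Suc j)
    then obtain Q where Q: "seqA (Some P) j = Some Q" "vp Q" "rounds Q = m"
      "card (supp m Q) + j \<le> card (supp m P)" by blast
    have h1: "expect (seqA (Some P) j) (dom_meas True (seqA (Some P) j)) \<noteq> 1"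
      and h2: "expect (seqB (Some P) j) (dom_meas False (seqB (Some P) j)) \<noteq> 1" using H by blast+
    have EA: "expect (Some Q) (domm True m Q) \<noteq> 1" using h1 Q(1,3) by (simp del: expect.simps)
    have EB: "expect (condA (Some Q)) (dom_meas False (condA (Some Q))) \<noteq> 1"
      using h2 Q(1) by (simp add: seqB_def del: expect.simps)
    obtain Q' where "condB (condA (Some Q)) = Some Q'" "vp Q'" "rounds Q' = m"
      "card (supp m Q') < card (supp m Q)"
      using step_lemma[OF Q(2,3) EA EB] by blast
    then show ?case using Q by (intro exI[of _ Q']) auto
  qed
  obtain Q where Q: "vp Q" "rounds Q = m" "card (supp m Q) + Suc (card (supp m P)) \<le> card (supp m P)"
    using inv[of "Suc (card (supp m P))"] by blast
  then show False by simp
qed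

end
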